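(* Let $0\le\gamma_2\le\gamma_1\le\frac\pi2$ with $\gamma_1+\gamma_2\le\frac\pi2$ and $-1\le x_3\le1$, and let $\rho=\frac12(\Sigma_0+x_3\Sigma_3)$. Define $$x_3^{(3,4)}:=\frac{-\sin\gamma_1\{\pm\sin\gamma_1+[\cos\gamma_1\cos\gamma_2+\sin^2\gamma_1]\sin\gamma_2\}}{1+\cos\gamma_1\{\cos\gamma_2-\sin\gamma_2[\cos\gamma_1\sin\gamma_2+\sin^2\gamma_1\tan\gamma_2]\}},$$ with the upper sign ($+$) giving $x_3^{(3)}$ and the lower sign ($-$) giving $x_3^{(4)}$. Then $-1\le x_3^{(3)}\le 0\le x_3^{(4)}\le 1$ and $$g(\rho)=\begin{cases}\frac{(1-x_3)[1+\cos(\gamma_1+\gamma_2)]}{4}, & -1\le x_3\le x_3^{(3)},\\[1ex] \dfrac{(1-x_3^2)\sin\gamma_1\cos\gamma_2(\cos\gamma_2\sin\gamma_1-x_3\cos\gamma_1\sin\gamma_2)}{-2\big[x_3^2-(\cos\gamma_2\sin\gamma_1-x_3\cos\gamma_1\sin\gamma_2)^2\big]}, & x_3^{(3)}<x_3<x_3^{(4)},\\[1ex] \frac{(1+x_3)[1+\cos(\gamma_1-\gamma_2)]}{4}, & x_3^{(4)}\le x_3\le1.\end{cases}$$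
   Context: On two qubits, let $\sigma_1,\sigma_2,\sigma_3$ denote the Pauli matrices acting on the first qubit and $\tau_1,\tau_2,\tau_3$ those acting on the second qubit (tensor products with the identity understood). For parameters $\gamma_1,\gamma_2$ set $u=\cos\gamma_1\cos\gamma_2$, $v=\sin\gamma_1\sin\gamma_2$, $z_1=\sin\gamma_1\cos\gamma_2$, $z_2=\cos\gamma_1\sin\gamma_2$, and define the operators $\Sigma_0=\frac12(I+u\sigma_3+v\tau_3+z_1\sigma_1\tau_1+z_2\sigma_2\tau_2)$ (a rank-two projector) and $\Sigma_3=\frac12(v\sigma_3+u\tau_3-z_2\sigma_1\tau_1-z_1\sigma_2\tau_2+\sigma_3\tau_3)$. For a two-qubit density matrix $\rho$, $g(\rho):=\max\operatorname{tr}[\rho(\rho_1\otimes\rho_2)]$, the maximum over all pure single-qubit states $\rho_1,\rho_2$. *)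

theory Defs
  imports Complex_Main "Jordan_Normal_Form.Matrix"
begin

definition mtrace :: "complex mat \<Rightarrow> complex" where
  "mtrace A = (\<Sum>i<dim_row A. A $$ (i,i))"

(* Kronecker (tensor) product; the first factor acts on the first qubit *)
definition kron :: "complex mat \<Rightarrow> complex mat \<Rightarrow> complex mat" where
  "kron A B = mat (dim_row A * dim_row B) (dim_col A * dim_col B)
     (\<lambda>(i,j). A $$ (i div dim_row B, j div dim_col B) * B $$ (i mod dim_row B, j mod dim_col B))"

definition pauli1 :: "complex mat" where
  "pauli1 = mat_of_rows_list 2 [[0, 1], [1, 0]]"
definition pauli2 :: "complex mat" where
  "pauli2 = mat_of_rows_list 2 [[0, -\<i>], [\<i>, 0]]"
definition pauli3 :: "complex mat" where
  "pauli3 = mat_of_rows_list 2 [[1, 0], [0, -1]]"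

definition I2 :: "complex mat" where "I2 = 1\<^sub>m 2"
definition I4 :: "complex mat" where "I4 = 1\<^sub>m 4"

(* sigma_k acts on the first qubit, tau_k on the second *)
definition sig :: "complex mat \<Rightarrow> complex mat" where "sig P = kron P I2"
definition tau :: "complex mat \<Rightarrow> complex mat" where "tau P = kron I2 P"

definition Sigma0 :: "real \<Rightarrow> real \<Rightarrow> complex mat" where
  "Sigma0 g1 g2 = (let u = cos g1 * cos g2; v = sin g1 * sin g2;
                       z1 = sin g1 * cos g2; z2 = cos g1 * sin g2 in
     (1/2 :: complex) \<cdot>\<^sub>m (I4 + complex_of_real u \<cdot>\<^sub>m sig pauli3 + complex_of_real v \<cdot>\<^sub>m tau pauli3
        + complex_of_real z1 \<cdot>\<^sub>m (sig pauli1 * tau pauli1)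
        + complex_of_real z2 \<cdot>\<^sub>m (sig pauli2 * tau pauli2)))"

definition Sigma3 :: "real \<Rightarrow> real \<Rightarrow> complex mat" where
  "Sigma3 g1 g2 = (let u = cos g1 * cos g2; v = sin g1 * sin g2;
                       z1 = sin g1 * cos g2; z2 = cos g1 * sin g2 in
     (1/2 :: complex) \<cdot>\<^sub>m (complex_of_real v \<cdot>\<^sub>m sig pauli3 + complex_of_real u \<cdot>\<^sub>m tau pauli3
        + complex_of_real (- z2) \<cdot>\<^sub>m (sig pauli1 * tau pauli1)
        + complex_of_real (- z1) \<cdot>\<^sub>m (sig pauli2 * tau pauli2)
        + sig pauli3 * tau pauli3))"

definition pure_qubit :: "complex mat \<Rightarrow> bool" where
  "pure_qubit P \<longleftrightarrow> (\<exists>\<psi> \<in> carrier_vec 2. (\<Sum>i<2. (cmod (\<psi> $ i))\<^sup>2) = 1 \<and>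
      P = mat 2 2 (\<lambda>(i,j). \<psi> $ i * cnj (\<psi> $ j)))"

(* g(rho) = max tr[rho (rho1 \<otimes> rho2)] over pure rho1, rho2 (the trace is real for Hermitian rho) *)
definition gmax :: "complex mat \<Rightarrow> real" where
  "gmax \<rho> = Sup {Re (mtrace (\<rho> * kron P Q)) | P Q. pure_qubit P \<and> pure_qubit Q}"

(* x_3^{(3)} (s = 1) and x_3^{(4)} (s = -1) *)
definition x3crit :: "real \<Rightarrow> real \<Rightarrow> real \<Rightarrow> real" where
  "x3crit s g1 g2 =
     (- sin g1 * (s * sin g1 + (cos g1 * cos g2 + (sin g1)\<^sup>2) * sin g2)) /
     (1 + cos g1 * (cos g2 - sin g2 * (cos g1 * sin g2 + (sin g1)\<^sup>2 * tan g2)))"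

end

theory Submission
  imports Defs
begin


lemma sum4: "(\<Sum>i<(4::nat). f i) = f 0 + f 1 + f 2 + (f 3 :: 'a::comm_monoid_add)"
  by (simp add: eval_nat_numeral lessThan_Suc add.assoc add.commute add.left_commute)

lemma sum04: "(\<Sum>i\<in>{0..<(4::nat)}. f i) = f 0 + f 1 + f 2 + (f 3 :: 'a::comm_monoid_add)"
  using sum4[of f] by (simp add: atLeast0LessThan)

lemma kron_dims[simp]: "dim_row (kron A B) = dim_row A * dim_row B" "dim_col (kron A B) = dim_col A * dim_col B"
  by (simp_all add: kron_def)

lemma kron_index: "i < dim_row A * dim_row B \<Longrightarrow> j < dim_col A * dim_col B \<Longrightarrow>
   kron A B $$ (i,j) = A $$ (i div dim_row B, j div dim_col B) * B $$ (i mod dim_row B, j mod dim_col B)"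
  by (simp add: kron_def)

lemma pauli_dims[simp]: "dim_row pauli1 = 2" "dim_col pauli1 = 2" "dim_row pauli2 = 2" "dim_col pauli2 = 2"
 "dim_row pauli3 = 2" "dim_col pauli3 = 2" "dim_row I2 = 2" "dim_col I2 = 2" "dim_row I4 = 4" "dim_col I4 = 4"
  by (simp_all add: pauli1_def pauli2_def pauli3_def I2_def I4_def mat_of_rows_list_def)

lemma pauli_entries[simp]:
  "pauli1 $$ (0,0) = 0" "pauli1 $$ (0,1) = 1" "pauli1 $$ (1,0) = 1" "pauli1 $$ (1,1) = 0"
  "pauli2 $$ (0,0) = 0" "pauli2 $$ (0,1) = -\<i>" "pauli2 $$ (1,0) = \<i>" "pauli2 $$ (1,1) = 0"
  "pauli3 $$ (0,0) = 1" "pauli3 $$ (0,1) = 0" "pauli3 $$ (1,0) = 0" "pauli3 $$ (1,1) = -1"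
  "I2 $$ (0,0) = 1" "I2 $$ (0,1) = 0" "I2 $$ (1,0) = 0" "I2 $$ (1,1) = 1"
  by (simp_all add: pauli1_def pauli2_def pauli3_def I2_def mat_of_rows_list_def)

lemma pauli_entries'[simp]:
  "pauli1 $$ (0,Suc 0) = 1" "pauli1 $$ (Suc 0,0) = 1" "pauli1 $$ (Suc 0,Suc 0) = 0"
  "pauli2 $$ (0,Suc 0) = -\<i>" "pauli2 $$ (Suc 0,0) = \<i>" "pauli2 $$ (Suc 0,Suc 0) = 0"
  "pauli3 $$ (0,Suc 0) = 0" "pauli3 $$ (Suc 0,0) = 0" "pauli3 $$ (Suc 0,Suc 0) = -1"
  "I2 $$ (0,Suc 0) = 0" "I2 $$ (Suc 0,0) = 0" "I2 $$ (Suc 0,Suc 0) = 1"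
  using pauli_entries by simp_all

lemma sig_tau_dims[simp]: "dim_row (sig P) = dim_row P * 2" "dim_col (sig P) = dim_col P * 2"
  "dim_row (tau P) = 2 * dim_row P" "dim_col (tau P) = 2 * dim_col P"
  by (simp_all add: sig_def tau_def)

lemma cases4: "(i::nat) < 4 \<Longrightarrow> (i = 0 \<Longrightarrow> P) \<Longrightarrow> (i = 1 \<Longrightarrow> P) \<Longrightarrow> (i = 2 \<Longrightarrow> P) \<Longrightarrow> (i = 3 \<Longrightarrow> P) \<Longrightarrow> P"
  by linarith

lemma mixed: assumes "dim_row P = 2" "dim_col P = 2" "dim_row Q = 2" "dim_col Q = 2"
  shows "sig P * tau Q = kron P Q"
proof (rule eq_matI)
  fix i j assume "i < dim_row (kron P Q)" "j < dim_col (kron P Q)"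
  then have i: "i < 4" and j: "j < 4" using assms by auto
  show "(sig P * tau Q) $$ (i, j) = kron P Q $$ (i, j)"
    using i j assms
    apply (simp add: sig_def tau_def kron_index scalar_prod_def sum04)
    apply (erule cases4; erule cases4; simp)
    done
qed (use assms in auto)

lemma Sig_dims[simp]: "dim_row (Sigma0 g1 g2) = 4" "dim_col (Sigma0 g1 g2) = 4"
   "dim_row (Sigma3 g1 g2) = 4" "dim_col (Sigma3 g1 g2) = 4"
  by (simp_all add: Sigma0_def Sigma3_def Let_def)

definition Rr :: "real \<Rightarrow> real \<Rightarrow> real \<Rightarrow> nat \<Rightarrow> nat \<Rightarrow> real" where
 "Rr g1 g2 x i j = (let u = cos g1 * cos g2; v = sin g1 * sin g2;
                       z1 = sin g1 * cos g2; z2 = cos g1 * sin g2 in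
   (if i = 0 \<and> j = 0 then 1 + u + v + x*(v+u+1)
    else if i = 1 \<and> j = 1 then 1 + u - v + x*(v-u-1)
    else if i = 2 \<and> j = 2 then 1 - u + v + x*(u-v-1)
    else if i = 3 \<and> j = 3 then 1 - u - v + x*(1-u-v)
    else if (i = 0 \<and> j = 3) \<or> (i = 3 \<and> j = 0) then z1 - z2 + x*(z1 - z2)
    else if (i = 1 \<and> j = 2) \<or> (i = 2 \<and> j = 1) then z1 + z2 - x*(z1 + z2)
    else 0) / 4)"

lemma rho_entry:
  assumes "i < 4" "j < 4"
  shows "((1/2 :: complex) \<cdot>\<^sub>m (Sigma0 g1 g2 + complex_of_real x \<cdot>\<^sub>m Sigma3 g1 g2)) $$ (i,j)
     = complex_of_real (Rr g1 g2 x i j)"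
proof -
  have pp: "sig P * tau Q = kron P Q" if "P \<in> {pauli1,pauli2,pauli3}" "Q \<in> {pauli1,pauli2,pauli3}" for P Q
    using that by (intro mixed) auto
  show ?thesis
    using assms
    apply (simp add: Sigma0_def Sigma3_def Let_def pp)
    apply (simp add: sig_def tau_def kron_index I4_def)
    apply (erule cases4; erule cases4; simp add: Rr_def Let_def; simp add: field_simps)
    done
qed

lemma trace_kron:
  assumes "dim_row R = 4" "dim_col R = 4" "\<psi> \<in> carrier_vec 2" "\<phi> \<in> carrier_vec 2"
  shows "mtrace (R * kron (mat 2 2 (\<lambda>(i,j). \<psi> $ i * cnj (\<psi> $ j))) (mat 2 2 (\<lambda>(i,j). \<phi> $ i * cnj (\<phi> $ j))))
    = (\<Sum>i<4. \<Sum>j<4. R $$ (i,j) * ((\<psi> $ (j div 2) * \<phi> $ (j mod 2)) * cnj (\<psi> $ (i div 2) * \<phi> $ (i mod 2))))"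
  using assms
  apply (simp add: mtrace_def scalar_prod_def atLeast0LessThan)
  apply (intro sum.cong refl)
  apply (simp add: kron_index)
  done

lemma Rr_vals:
  assumes "cos g1 = ca*cb - sa*sb" "sin g1 = sa*cb + ca*sb" "cos g2 = ca*cb + sa*sb" "sin g2 = sa*cb - ca*sb"
    "ca^2+sa^2=1" "cb^2+sb^2=1"
  shows "Rr g1 g2 x 0 0 = (1+x)/2 * cb^2" "Rr g1 g2 x 3 3 = (1+x)/2 * sb^2"
    "Rr g1 g2 x 0 3 = (1+x)/2 * cb * sb" "Rr g1 g2 x 3 0 = (1+x)/2 * cb * sb"
    "Rr g1 g2 x 1 1 = (1-x)/2 * ca^2" "Rr g1 g2 x 2 2 = (1-x)/2 * sa^2"
    "Rr g1 g2 x 1 2 = (1-x)/2 * ca * sa" "Rr g1 g2 x 2 1 = (1-x)/2 * ca * sa"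
    "Rr g1 g2 x 0 1 = 0" "Rr g1 g2 x 0 2 = 0" "Rr g1 g2 x 1 0 = 0" "Rr g1 g2 x 1 3 = 0"
    "Rr g1 g2 x 2 0 = 0" "Rr g1 g2 x 2 3 = 0" "Rr g1 g2 x 3 1 = 0" "Rr g1 g2 x 3 2 = 0"
proof -
  define u where "u = cos g1 * cos g2"
  define v where "v = sin g1 * sin g2"
  define z1 where "z1 = sin g1 * cos g2"
  define z2 where "z2 = cos g1 * sin g2"
  have e1: "1+(u+v) = 2*cb^2" unfolding u_def v_def assms(1-4) using assms(5,6) by Groebner_Basis.algebra
  have e2: "1-(u+v) = 2*sb^2" unfolding u_def v_def assms(1-4) using assms(5,6) by Groebner_Basis.algebra
  have e3: "1+(u-v) = 2*ca^2" unfolding u_def v_def assms(1-4) using assms(5,6) by Groebner_Basis.algebra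
  have e4: "1-(u-v) = 2*sa^2" unfolding u_def v_def assms(1-4) using assms(5,6) by Groebner_Basis.algebra
  have e5: "z1-z2 = 2*cb*sb" unfolding z1_def z2_def assms(1-4) using assms(5,6) by Groebner_Basis.algebra
  have e6: "z1+z2 = 2*ca*sa" unfolding z1_def z2_def assms(1-4) using assms(5,6) by Groebner_Basis.algebra
  have R: "Rr g1 g2 x i j = (if i = 0 \<and> j = 0 then (1+x)*(1+(u+v))
    else if i = 1 \<and> j = 1 then (1-x)*(1+(u-v))
    else if i = 2 \<and> j = 2 then (1-x)*(1-(u-v))
    else if i = 3 \<and> j = 3 then (1+x)*(1-(u+v))
    else if (i = 0 \<and> j = 3) \<or> (i = 3 \<and> j = 0) then (1+x)*(z1-z2)
    else if (i = 1 \<and> j = 2) \<or> (i = 2 \<and> j = 1) then (1-x)*(z1+z2)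
    else 0) / 4" for i j
    unfolding Rr_def Let_def u_def[symmetric] v_def[symmetric] z1_def[symmetric] z2_def[symmetric]
    by (simp add: algebra_simps)
  show "Rr g1 g2 x 0 0 = (1+x)/2 * cb^2" "Rr g1 g2 x 3 3 = (1+x)/2 * sb^2"
    "Rr g1 g2 x 0 3 = (1+x)/2 * cb * sb" "Rr g1 g2 x 3 0 = (1+x)/2 * cb * sb"
    "Rr g1 g2 x 1 1 = (1-x)/2 * ca^2" "Rr g1 g2 x 2 2 = (1-x)/2 * sa^2"
    "Rr g1 g2 x 1 2 = (1-x)/2 * ca * sa" "Rr g1 g2 x 2 1 = (1-x)/2 * ca * sa"
    "Rr g1 g2 x 0 1 = 0" "Rr g1 g2 x 0 2 = 0" "Rr g1 g2 x 1 0 = 0" "Rr g1 g2 x 1 3 = 0"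
    "Rr g1 g2 x 2 0 = 0" "Rr g1 g2 x 2 3 = 0" "Rr g1 g2 x 3 1 = 0" "Rr g1 g2 x 3 2 = 0"
    unfolding R e1 e2 e3 e4 e5 e6 by simp_all
qed

lemma dsum:
  fixes a b :: "nat \<Rightarrow> complex" and f :: "nat \<Rightarrow> nat \<Rightarrow> real"
  assumes RV: "f 0 0 = p * cb^2" "f 3 3 = p * sb^2"
    "f 0 3 = p * cb * sb" "f 3 0 = p * cb * sb"
    "f 1 1 = q * ca^2" "f 2 2 = q * sa^2"
    "f 1 2 = q * ca * sa" "f 2 1 = q * ca * sa"
    "f 0 1 = 0" "f 0 2 = 0" "f 1 0 = 0" "f 1 3 = 0"
    "f 2 0 = 0" "f 2 3 = 0" "f 3 1 = 0" "f 3 2 = 0"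
  shows "(\<Sum>i<4. \<Sum>j<4. complex_of_real (f i j) * ((a (j div 2) * b (j mod 2)) * cnj (a (i div 2) * b (i mod 2))))
     = of_real p * ((of_real cb * a 0 * b 0 + of_real sb * a 1 * b 1) * cnj (of_real cb * a 0 * b 0 + of_real sb * a 1 * b 1))
     + of_real q * ((of_real ca * a 0 * b 1 + of_real sa * a 1 * b 0) * cnj (of_real ca * a 0 * b 1 + of_real sa * a 1 * b 0))"
proof -
  have "(\<Sum>i<4. \<Sum>j<4. complex_of_real (f i j) * ((a (j div 2) * b (j mod 2)) * cnj (a (i div 2) * b (i mod 2))))
    = of_real (f 0 0) * (a 0 * b 0 * cnj (a 0 * b 0)) + of_real (f 0 3) * (a 1 * b 1 * cnj (a 0 * b 0))
    + of_real (f 1 1) * (a 0 * b 1 * cnj (a 0 * b 1)) + of_real (f 1 2) * (a 1 * b 0 * cnj (a 0 * b 1))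
    + of_real (f 2 1) * (a 0 * b 1 * cnj (a 1 * b 0)) + of_real (f 2 2) * (a 1 * b 0 * cnj (a 1 * b 0))
    + of_real (f 3 0) * (a 0 * b 0 * cnj (a 1 * b 1)) + of_real (f 3 3) * (a 1 * b 1 * cnj (a 1 * b 1))"
    by (simp add: sum4 RV[unfolded One_nat_def])
  also have "\<dots> = of_real p * ((of_real cb * a 0 * b 0 + of_real sb * a 1 * b 1) * cnj (of_real cb * a 0 * b 0 + of_real sb * a 1 * b 1))
     + of_real q * ((of_real ca * a 0 * b 1 + of_real sa * a 1 * b 0) * cnj (of_real ca * a 0 * b 1 + of_real sa * a 1 * b 0))"
    unfolding RV by (simp only: complex_cnj_add complex_cnj_mult complex_cnj_complex_of_real of_real_mult of_real_power) Groebner_Basis.algebra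
  finally show ?thesis .
qed

lemma trace_generic:
  assumes "dim_row R = 4" "dim_col R = 4" "\<psi> \<in> carrier_vec 2" "\<phi> \<in> carrier_vec 2"
   and ent: "\<And>i j. i<4 \<Longrightarrow> j<4 \<Longrightarrow> R $$ (i,j) = complex_of_real (f i j)"
  shows "mtrace (R * kron (mat 2 2 (\<lambda>(i,j). \<psi> $ i * cnj (\<psi> $ j))) (mat 2 2 (\<lambda>(i,j). \<phi> $ i * cnj (\<phi> $ j))))
     = (\<Sum>i<4. \<Sum>j<4. complex_of_real (f i j) * ((\<psi> $ (j div 2) * \<phi> $ (j mod 2)) * cnj (\<psi> $ (i div 2) * \<phi> $ (i mod 2))))"
  unfolding trace_kron[OF assms(1-4)]
  apply (rule sum.cong[OF refl])
  apply (rule sum.cong[OF refl])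
  apply (subst ent)
  apply auto
  done

lemma trace_value:
  assumes "cos g1 = ca*cb - sa*sb" "sin g1 = sa*cb + ca*sb" "cos g2 = ca*cb + sa*sb" "sin g2 = sa*cb - ca*sb"
    "ca^2+sa^2=1" "cb^2+sb^2=1" "\<psi> \<in> carrier_vec 2" "\<phi> \<in> carrier_vec 2"
  shows "Re (mtrace (((1/2 :: complex) \<cdot>\<^sub>m (Sigma0 g1 g2 + complex_of_real x \<cdot>\<^sub>m Sigma3 g1 g2))
         * kron (mat 2 2 (\<lambda>(i,j). \<psi> $ i * cnj (\<psi> $ j))) (mat 2 2 (\<lambda>(i,j). \<phi> $ i * cnj (\<phi> $ j)))))
     = (1+x)/2 * (cmod (of_real cb * \<psi>$0 * \<phi>$0 + of_real sb * \<psi>$1 * \<phi>$1))^2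
     + (1-x)/2 * (cmod (of_real ca * \<psi>$0 * \<phi>$1 + of_real sa * \<psi>$1 * \<phi>$0))^2"
proof -
  have "mtrace (((1/2 :: complex) \<cdot>\<^sub>m (Sigma0 g1 g2 + complex_of_real x \<cdot>\<^sub>m Sigma3 g1 g2))
         * kron (mat 2 2 (\<lambda>(i,j). \<psi> $ i * cnj (\<psi> $ j))) (mat 2 2 (\<lambda>(i,j). \<phi> $ i * cnj (\<phi> $ j))))
     = (\<Sum>i<4. \<Sum>j<4. complex_of_real (Rr g1 g2 x i j) * (((\<lambda>k. \<psi> $ k) (j div 2) * (\<lambda>k. \<phi> $ k) (j mod 2)) * cnj ((\<lambda>k. \<psi> $ k) (i div 2) * (\<lambda>k. \<phi> $ k) (i mod 2))))"
    by (rule trace_generic[OF _ _ assms(7,8)]) (simp, simp, rule rho_entry)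
  also have "\<dots> = of_real ((1+x)/2) * ((of_real cb * \<psi>$0 * \<phi>$0 + of_real sb * \<psi>$1 * \<phi>$1) * cnj (of_real cb * \<psi>$0 * \<phi>$0 + of_real sb * \<psi>$1 * \<phi>$1))
     + of_real ((1-x)/2) * ((of_real ca * \<psi>$0 * \<phi>$1 + of_real sa * \<psi>$1 * \<phi>$0) * cnj (of_real ca * \<psi>$0 * \<phi>$1 + of_real sa * \<psi>$1 * \<phi>$0))"
    by (rule dsum[where a="\<lambda>k. \<psi> $ k" and b="\<lambda>k. \<phi> $ k"]) (rule Rr_vals[OF assms(1-6)])+
  finally show ?thesis
    by (simp only: complex_norm_square[symmetric] of_real_mult[symmetric] of_real_add[symmetric] Re_complex_of_real)
qed




lemma psd2:
  fixes m11 m12 m22 r0 r1 :: real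
  assumes "m11 \<ge> 0" "m22 \<ge> 0" "m12^2 \<le> m11*m22"
  shows "0 \<le> m11*r0^2 + 2*m12*r0*r1 + m22*r1^2"
proof (cases "m11 = 0")
  case True
  then have "m12^2 \<le> 0" using assms by simp
  then have "m12^2 = 0" by (meson antisym zero_le_power2)
  then have "m12 = 0" by simp
  then show ?thesis using True assms by simp
next
  case False
  then have pos: "m11 > 0" using assms by simp
  have "m11*(m11*r0^2 + 2*m12*r0*r1 + m22*r1^2) = (m11*r0 + m12*r1)^2 + (m11*m22 - m12^2)*r1^2"
    by (simp add: algebra_simps power2_eq_square)
  also have "\<dots> \<ge> 0" using assms by (intro add_nonneg_nonneg mult_nonneg_nonneg) auto
  finally show ?thesis using pos by (simp add: zero_le_mult_iff)
qed

lemma fbound: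
  fixes p q ca sa cb sb G r0 r1 t0 t1 :: real
  assumes "r0^2+r1^2 = 1" "t0^2+t1^2=1"
    "0 \<le> G - p*cb^2*t0^2 - q*ca^2*t1^2" "0 \<le> G - q*sa^2*t0^2 - p*sb^2*t1^2"
    "(t0*t1*(p*cb*sb+q*ca*sa))^2 \<le> (G - p*cb^2*t0^2 - q*ca^2*t1^2)*(G - q*sa^2*t0^2 - p*sb^2*t1^2)"
  shows "p*(cb*r0*t0 + sb*r1*t1)^2 + q*(ca*r0*t1 + sa*r1*t0)^2 \<le> G"
proof -
  have "0 \<le> (G - p*cb^2*t0^2 - q*ca^2*t1^2)*r0^2 + 2*(-(t0*t1*(p*cb*sb+q*ca*sa)))*r0*r1
          + (G - q*sa^2*t0^2 - p*sb^2*t1^2)*r1^2"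
    by (rule psd2) (use assms in \<open>simp_all add: power_mult_distrib\<close>)
  also have "\<dots> = G*(r0^2+r1^2) - (p*(cb*r0*t0 + sb*r1*t1)^2 + q*(ca*r0*t1 + sa*r1*t0)^2)"
    by (simp add: algebra_simps power2_eq_square)
  finally show ?thesis using assms(1) by simp
qed

lemma eig:
  fixes m11 m12 m22 :: real
  assumes "m11*m22 = m12^2"
  shows "\<exists>r0 r1. r0^2+r1^2 = 1 \<and> m11*r0^2 + 2*m12*r0*r1 + m22*r1^2 = 0"
proof (cases "m11 = 0 \<and> m12 = 0")
  case True
  then show ?thesis by (intro exI[of _ 1] exI[of _ 0]) simp
next
  case False
  define n where "n = sqrt (m11^2 + m12^2)"
  have pos: "m11^2 + m12^2 > 0" using False by (simp add: sum_power2_gt_zero_iff)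
  then have n2: "n^2 = m11^2 + m12^2" and n0: "n > 0" by (simp_all add: n_def)
  have e: "(-m12/n)^2 + (m11/n)^2 = (m11^2 + m12^2)/n^2" by (simp add: power_divide add_divide_distrib add.commute)
  have "(-m12/n)^2 + (m11/n)^2 = 1" unfolding e n2 by (rule divide_self) (use pos in linarith)
  moreover have "m11*(-m12/n)^2 + 2*m12*(-m12/n)*(m11/n) + m22*(m11/n)^2 = 0"
  proof -
    have "m11*(-m12/n)^2 + 2*m12*(-m12/n)*(m11/n) + m22*(m11/n)^2 = m11*(m11*m22 - m12^2)/n^2"
      using n0 by (simp add: power_divide field_simps power2_eq_square)
    then show ?thesis using assms by simp
  qed
  ultimately show ?thesis by blast
qed

locale hs =
  fixes ca sa cb sb p q :: real
  assumes cs_a: "ca^2+sa^2=1" and cs_b: "cb^2+sb^2=1" and pq: "p+q=1"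
    and p0: "p\<ge>0" and q0: "q\<ge>0" and ca0: "ca>0" and cb0: "cb>0" and sa0: "sa\<ge>0" and sb0: "sb\<ge>0"
    and sbcb: "sb\<le>cb" and saca: "sa\<le>ca" and sbsa: "sb\<le>sa"
begin

definition "cA = ca^2-sa^2"
definition "sA = 2*sa*ca"
definition "cB = cb^2-sb^2"
definition "sB = 2*sb*cb"
definition "TT = p*sB + q*sA"
definition "Tp = p*cb*sb + q*ca*sa"
definition "Gn = p*q*(sA+sB)*TT"
definition "Gd = TT^2 - (p-q)^2"
definition "f3 = q*(cb+sb*sA)-p*cb*cB"
definition "f1 = p*(ca+sa*sB)-q*ca*cA"
definition "h3 = q*(sb+cb*sA)+p*sb*cB"
definition "h1 = p*(sa+ca*sB)+q*sa*cA"

definition "ff r0 r1 t0 t1 = p*(cb*r0*t0 + sb*r1*t1)^2 + q*(ca*r0*t1 + sa*r1*t0)^2"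

lemma I1: "Gn - p*cb^2*Gd = p*f3^2"
  unfolding Gn_def Gd_def f3_def TT_def sA_def sB_def cA_def cB_def using cs_a cs_b pq by Groebner_Basis.algebra
lemma I2: "Gn - q*ca^2*Gd = q*f1^2"
  unfolding Gn_def Gd_def f1_def TT_def sA_def sB_def cA_def cB_def using cs_a cs_b pq by Groebner_Basis.algebra
lemma I3: "Gn - p*sb^2*Gd = p*h3^2"
  unfolding Gn_def Gd_def h3_def TT_def sA_def sB_def cA_def cB_def using cs_a cs_b pq by Groebner_Basis.algebra
lemma I4: "Gn - q*sa^2*Gd = q*h1^2"
  unfolding Gn_def Gd_def h1_def TT_def sA_def sB_def cA_def cB_def using cs_a cs_b pq by Groebner_Basis.algebra
lemma I5: "Tp*Gd = p*f3*h3 + q*f1*h1"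
  unfolding Tp_def Gd_def f1_def f3_def h1_def h3_def TT_def sA_def sB_def cA_def cB_def using cs_a cs_b pq by Groebner_Basis.algebra

lemma cAcB: "cA \<ge> 0" "cB \<ge> 0" "sA \<ge> 0" "sB \<ge> 0" "cA^2 + sA^2 = 1" "cB^2+sB^2 = 1"
proof -
  have "sa^2 \<le> ca^2" using saca sa0 by (intro power_mono) auto
  then show "cA \<ge> 0" by (simp add: cA_def)
  have "sb^2 \<le> cb^2" using sbcb sb0 by (intro power_mono) auto
  then show "cB \<ge> 0" by (simp add: cB_def)
  show "sA \<ge> 0" "sB \<ge> 0" using sa0 ca0 sb0 cb0 by (simp_all add: sA_def sB_def)
  show "cA^2 + sA^2 = 1" unfolding cA_def sA_def using cs_a by Groebner_Basis.algebra
  show "cB^2 + sB^2 = 1" unfolding cB_def sB_def using cs_b by Groebner_Basis.algebra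
qed

lemma reg3:
  assumes "f3 \<le> 0" "r0^2+r1^2=1" "t0^2+t1^2=1"
  shows "ff r0 r1 t0 t1 \<le> p*cb^2"
proof -
  note c = cAcB
  have "q*cb \<le> p*cb*cB" using assms(1) q0 sb0 c(3) unfolding f3_def
    by (smt (verit) mult_nonneg_nonneg distrib_left)
  then have qpc: "q \<le> p*cB" using cb0 by (simp add: mult.commute mult_le_cancel_left_pos)
  have ca1: "ca^2 \<le> 1" "sa^2 \<le> 1" using cs_a by (smt (verit) zero_le_power2)+
  have h1: "q*ca^2 \<le> p*cb^2"
  proof -
    have "q*ca^2 \<le> q" using ca1 q0 by (simp add: mult_left_le)
    also have "\<dots> \<le> p*cB" by (rule qpc)
    also have "\<dots> \<le> p*cb^2" using p0 sb0 unfolding cB_def by (simp add: mult_left_mono)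
    finally show ?thesis .
  qed
  have h2: "q*sa^2 \<le> p*cb^2"
  proof -
    have "q*sa^2 \<le> q" using ca1 q0 by (simp add: mult_left_le)
    also have "\<dots> \<le> p*cB" by (rule qpc)
    also have "\<dots> \<le> p*cb^2" using p0 sb0 unfolding cB_def by (simp add: mult_left_mono)
    finally show ?thesis .
  qed
  have h3: "p*sb^2 \<le> p*cb^2" using p0 sbcb sb0 by (intro mult_left_mono power_mono) auto
  have e1: "p*cb^2 - p*cb^2*t0^2 - q*ca^2*t1^2 = (p*cb^2 - q*ca^2)*t1^2"
    using assms(3) by Groebner_Basis.algebra
  have e2: "p*cb^2 - q*sa^2*t0^2 - p*sb^2*t1^2 = (p*cb^2 - q*sa^2)*t0^2 + (p*cb^2 - p*sb^2)*t1^2"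
    using assms(3) by Groebner_Basis.algebra
  have e3: "(p*cb^2 - p*cb^2*t0^2 - q*ca^2*t1^2)*(p*cb^2 - q*sa^2*t0^2 - p*sb^2*t1^2) - (t0*t1*(p*cb*sb+q*ca*sa))^2
     = t1^2*(t0^2*(-p*cb*f3) + t1^2*(p*cb^2-q*ca^2)*(p*cb^2-p*sb^2))"
    unfolding f3_def sA_def cB_def using assms(3) cs_a cs_b pq by Groebner_Basis.algebra
  have k: "0 \<le> -p*cb*f3"
  proof -
    have "0 \<le> (p*cb)*(-f3)" using assms(1) p0 cb0 by (intro mult_nonneg_nonneg) auto
    then show ?thesis by (simp only: mult_minus_left mult_minus_right)
  qed
  have A: "0 \<le> t0^2*(-p*cb*f3)" by (rule mult_nonneg_nonneg[OF zero_le_power2 k])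
  have B: "0 \<le> t1^2*(p*cb^2-q*ca^2)*(p*cb^2-p*sb^2)" by (intro mult_nonneg_nonneg) (use h1 h3 in auto)
  have "t1^2*(t0^2*(-p*cb*f3) + t1^2*(p*cb^2-q*ca^2)*(p*cb^2-p*sb^2)) \<ge> 0"
    by (rule mult_nonneg_nonneg[OF zero_le_power2 add_nonneg_nonneg[OF A B]])
  then have d: "(t0*t1*(p*cb*sb+q*ca*sa))^2 \<le> (p*cb^2 - p*cb^2*t0^2 - q*ca^2*t1^2)*(p*cb^2 - q*sa^2*t0^2 - p*sb^2*t1^2)"
    using e3 by linarith
  have m1: "0 \<le> p*cb^2 - p*cb^2*t0^2 - q*ca^2*t1^2" unfolding e1 using h1 by simp
  have m2: "0 \<le> p*cb^2 - q*sa^2*t0^2 - p*sb^2*t1^2" unfolding e2 using h2 h3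
    by (intro add_nonneg_nonneg mult_nonneg_nonneg) auto
  show ?thesis unfolding ff_def by (rule fbound[OF assms(2,3) m1 m2 d])
qed

lemma reg1:
  assumes "f1 \<le> 0" "r0^2+r1^2=1" "t0^2+t1^2=1"
  shows "ff r0 r1 t0 t1 \<le> q*ca^2"
proof -
  note c = cAcB
  have "p*ca \<le> q*ca*cA" using assms(1) p0 sa0 c(4) unfolding f1_def
    by (smt (verit) mult_nonneg_nonneg distrib_left)
  then have qpc: "p \<le> q*cA" using ca0 by (simp add: mult.commute mult_le_cancel_left_pos)
  have cb1: "cb^2 \<le> 1" "sb^2 \<le> 1" using cs_b by (smt (verit) zero_le_power2)+
  have h1: "p*cb^2 \<le> q*ca^2"
  proof -
    have "p*cb^2 \<le> p" using cb1 p0 by (simp add: mult_left_le)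
    also have "\<dots> \<le> q*cA" by (rule qpc)
    also have "\<dots> \<le> q*ca^2" using q0 sa0 unfolding cA_def by (simp add: mult_left_mono)
    finally show ?thesis .
  qed
  have h2: "p*sb^2 \<le> q*ca^2"
  proof -
    have "p*sb^2 \<le> p" using cb1 p0 by (simp add: mult_left_le)
    also have "\<dots> \<le> q*cA" by (rule qpc)
    also have "\<dots> \<le> q*ca^2" using q0 sa0 unfolding cA_def by (simp add: mult_left_mono)
    finally show ?thesis .
  qed
  have h3: "q*sa^2 \<le> q*ca^2" using q0 saca sa0 by (intro mult_left_mono power_mono) auto
  have e1: "q*ca^2 - p*cb^2*t0^2 - q*ca^2*t1^2 = (q*ca^2 - p*cb^2)*t0^2"
    using assms(3) by Groebner_Basis.algebra
  have e2: "q*ca^2 - q*sa^2*t0^2 - p*sb^2*t1^2 = (q*ca^2 - q*sa^2)*t0^2 + (q*ca^2 - p*sb^2)*t1^2"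
    using assms(3) by Groebner_Basis.algebra
  have e3: "(q*ca^2 - p*cb^2*t0^2 - q*ca^2*t1^2)*(q*ca^2 - q*sa^2*t0^2 - p*sb^2*t1^2) - (t0*t1*(p*cb*sb+q*ca*sa))^2
     = t0^2*(t1^2*(-q*ca*f1) + t0^2*(q*ca^2-p*cb^2)*(q*ca^2-q*sa^2))"
    unfolding f1_def sB_def cA_def using assms(3) cs_a cs_b pq by Groebner_Basis.algebra
  have k: "0 \<le> -q*ca*f1"
  proof -
    have "0 \<le> (q*ca)*(-f1)" using assms(1) q0 ca0 by (intro mult_nonneg_nonneg) auto
    then show ?thesis by (simp only: mult_minus_left mult_minus_right)
  qed
  have A: "0 \<le> t1^2*(-q*ca*f1)" by (rule mult_nonneg_nonneg[OF zero_le_power2 k])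
  have B: "0 \<le> t0^2*(q*ca^2-p*cb^2)*(q*ca^2-q*sa^2)" by (intro mult_nonneg_nonneg) (use h1 h3 in auto)
  have "t0^2*(t1^2*(-q*ca*f1) + t0^2*(q*ca^2-p*cb^2)*(q*ca^2-q*sa^2)) \<ge> 0"
    by (rule mult_nonneg_nonneg[OF zero_le_power2 add_nonneg_nonneg[OF A B]])
  then have d: "(t0*t1*(p*cb*sb+q*ca*sa))^2 \<le> (q*ca^2 - p*cb^2*t0^2 - q*ca^2*t1^2)*(q*ca^2 - q*sa^2*t0^2 - p*sb^2*t1^2)"
    using e3 by linarith
  have m1: "0 \<le> q*ca^2 - p*cb^2*t0^2 - q*ca^2*t1^2" unfolding e1 using h1 by simp
  have m2: "0 \<le> q*ca^2 - q*sa^2*t0^2 - p*sb^2*t1^2" unfolding e2 using h2 h3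
    by (intro add_nonneg_nonneg mult_nonneg_nonneg) auto
  show ?thesis unfolding ff_def by (rule fbound[OF assms(2,3) m1 m2 d])
qed

lemma mid_pos:
  assumes "f1 > 0" "f3 > 0"
  shows "p > 0" "q > 0" "Gd > 0" "sa > 0"
proof -
  note c = cAcB
  show pp: "p > 0"
  proof (rule ccontr)
    assume "\<not> p > 0" then have "p = 0" using p0 by simp
    then have "f1 = - q*ca*cA" unfolding f1_def by simp
    moreover have "q*ca*cA \<ge> 0" using q0 ca0 c(1) by simp
    ultimately show False using assms by simp
  qed
  show qq: "q > 0"
  proof (rule ccontr)
    assume "\<not> q > 0" then have "q = 0" using q0 by simp
    then have "f3 = - p*cb*cB" unfolding f3_def by simp
    moreover have "p*cb*cB \<ge> 0" using p0 cb0 c(2) by simp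
    ultimately show False using assms by simp
  qed
  define U where "U = q*(1+sA) - p*(1-sB)"
  define V where "V = p*(1+sB) - q*(1-sA)"
  have GUV: "Gd = U*V" unfolding Gd_def U_def V_def TT_def by Groebner_Basis.algebra
  have eU: "cb*cB*U = (1-sB)*f3 + q*(cb-sb)*(sA+sB)"
    unfolding U_def f3_def cB_def sB_def sA_def using cs_a cs_b by Groebner_Basis.algebra
  have eV: "ca*cA*V = (1-sA)*f1 + p*(ca-sa)*(sA+sB)"
    unfolding V_def f1_def cA_def sA_def sB_def using cs_a cs_b by Groebner_Basis.algebra
  have U0: "U > 0"
  proof (cases "cB = 0")
    case True
    then have "sB^2 = 1" using c(6) by simp
    then have "sB = 1" using c(4) by (simp add: power2_eq_1_iff)
    then show ?thesis using qq c(3) by (simp add: U_def)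
  next
    case False
    then have cBp: "cB > 0" using c(2) by simp
    have "sB^2 < 1" using c(6) cBp by (smt (verit) zero_less_power)
    then have "sB < 1" by (smt (verit) one_le_power power2_eq_1_iff c(4))
    then have "(1-sB)*f3 > 0" using assms by simp
    moreover have "q*(cb-sb)*(sA+sB) \<ge> 0" using q0 sbcb c(3,4) by simp
    ultimately have "cb*cB*U > 0" using eU by simp
    then show ?thesis using zero_less_mult_pos[of "cb*cB" U] cb0 cBp by simp
  qed
  have V0: "V > 0"
  proof (cases "cA = 0")
    case True
    then have "sA^2 = 1" using c(5) by simp
    then have "sA = 1" using c(3) by (simp add: power2_eq_1_iff)
    then show ?thesis using pp c(4) by (simp add: V_def)
  next
    case False
    then have cAp: "cA > 0" using c(1) by simp
    have "sA^2 < 1" using c(5) cAp by (smt (verit) zero_less_power)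
    then have "sA < 1" by (smt (verit) one_le_power power2_eq_1_iff c(3))
    then have "(1-sA)*f1 > 0" using assms by simp
    moreover have "p*(ca-sa)*(sA+sB) \<ge> 0" using p0 saca c(3,4) by simp
    ultimately have "ca*cA*V > 0" using eV by simp
    then show ?thesis using zero_less_mult_pos[of "ca*cA" V] ca0 cAp by simp
  qed
  show "Gd > 0" using GUV U0 V0 by simp
  show "sa > 0"
  proof (rule ccontr)
    assume "\<not> sa > 0"
    then have sa0': "sa = 0" using sa0 by simp
    then have sb0': "sb = 0" using sbsa sb0 by simp
    have "ca^2 = 1" "cb^2 = 1" using cs_a cs_b sa0' sb0' by simp_all
    then have "ca = 1" "cb = 1" using ca0 cb0 by (simp_all add: power2_eq_1_iff)
    then have "f1 = p - q" "f3 = q - p" unfolding f1_def f3_def sA_def sB_def cA_def cB_def using sa0' sb0'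
      by simp_all
    then show False using assms by simp
  qed
qed

lemma mid_facts:
  assumes "f1 > 0" "f3 > 0" "t0^2+t1^2=1"
  shows "Gn/Gd - p*cb^2*t0^2 - q*ca^2*t1^2 = (p*f3^2*t0^2 + q*f1^2*t1^2)/Gd"
    "Gn/Gd - q*sa^2*t0^2 - p*sb^2*t1^2 = (q*h1^2*t0^2 + p*h3^2*t1^2)/Gd"
    "(Gn/Gd - p*cb^2*t0^2 - q*ca^2*t1^2)*(Gn/Gd - q*sa^2*t0^2 - p*sb^2*t1^2) - (t0*t1*(p*cb*sb+q*ca*sa))^2
      = p*q*(f3*h1*t0^2 - f1*h3*t1^2)^2/Gd^2"
proof -
  have Gd: "Gd > 0" using mid_pos assms by simp
  have a: "Gn = p*cb^2*Gd + p*f3^2" "Gn = q*ca^2*Gd + q*f1^2" "Gn = p*sb^2*Gd + p*h3^2" "Gn = q*sa^2*Gd + q*h1^2"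
    using I1 I2 I3 I4 by Groebner_Basis.algebra+
  have t: "t0^2 = 1 - t1^2" using assms(3) by simp
  have b: "p*cb*sb+q*ca*sa = (p*f3*h3 + q*f1*h1)/Gd" using I5 Gd unfolding Tp_def by (simp add: field_simps)
  show e1: "Gn/Gd - p*cb^2*t0^2 - q*ca^2*t1^2 = (p*f3^2*t0^2 + q*f1^2*t1^2)/Gd"
    using Gd a(1,2) t by (simp add: field_simps) Groebner_Basis.algebra
  show e2: "Gn/Gd - q*sa^2*t0^2 - p*sb^2*t1^2 = (q*h1^2*t0^2 + p*h3^2*t1^2)/Gd"
    using Gd a(3,4) t by (simp add: field_simps) Groebner_Basis.algebra
  show "(Gn/Gd - p*cb^2*t0^2 - q*ca^2*t1^2)*(Gn/Gd - q*sa^2*t0^2 - p*sb^2*t1^2) - (t0*t1*(p*cb*sb+q*ca*sa))^2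
      = p*q*(f3*h1*t0^2 - f1*h3*t1^2)^2/Gd^2"
    unfolding e1 e2 b using Gd by (simp add: field_simps) Groebner_Basis.algebra
qed

lemma h_nonneg: "h1 \<ge> 0" "h3 \<ge> 0"
  using cAcB p0 q0 sa0 sb0 ca0 cb0 unfolding h1_def h3_def
  by (simp_all add: add_nonneg_nonneg mult_nonneg_nonneg)

lemma mid_bound:
  assumes "f1 > 0" "f3 > 0" "r0^2+r1^2=1" "t0^2+t1^2=1"
  shows "ff r0 r1 t0 t1 \<le> Gn/Gd"
proof -
  have Gd: "Gd > 0" using mid_pos assms by simp
  note m = mid_facts[OF assms(1,2,4)]
  show ?thesis unfolding ff_def
  proof (rule fbound[OF assms(3,4)])
    show "0 \<le> Gn/Gd - p*cb^2*t0^2 - q*ca^2*t1^2" unfolding m(1) using Gd p0 q0 by simp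
    show "0 \<le> Gn/Gd - q*sa^2*t0^2 - p*sb^2*t1^2" unfolding m(2) using Gd p0 q0 by simp
    show "(t0*t1*(p*cb*sb+q*ca*sa))^2 \<le> (Gn/Gd - p*cb^2*t0^2 - q*ca^2*t1^2)*(Gn/Gd - q*sa^2*t0^2 - p*sb^2*t1^2)"
      using m(3) p0 q0 by (smt (verit) divide_nonneg_nonneg mult_nonneg_nonneg zero_le_power2)
  qed
qed

lemma mid_attain:
  assumes "f1 > 0" "f3 > 0"
  shows "\<exists>r0 r1 t0 t1. r0^2+r1^2=1 \<and> t0^2+t1^2=1 \<and> ff r0 r1 t0 t1 = Gn/Gd"
proof -
  note mp = mid_pos[OF assms]
  note hn = h_nonneg
  have "h1 > 0"
  proof -
    have "h1 \<ge> p*sa" using cAcB q0 sa0 ca0 p0 unfolding h1_def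
      by (smt (verit) mult_nonneg_nonneg distrib_left)
    moreover have "p*sa > 0" using mp by simp
    ultimately show ?thesis by simp
  qed
  define s where "s = f1*h3 + f3*h1"
  have s0: "s > 0" unfolding s_def using assms hn \<open>h1 > 0\<close> by (simp add: add_nonneg_pos)
  define t0 where "t0 = sqrt (f1*h3/s)"
  define t1 where "t1 = sqrt (f3*h1/s)"
  have t0s: "t0^2 = f1*h3/s" unfolding t0_def using assms hn s0 by simp
  have t1s: "t1^2 = f3*h1/s" unfolding t1_def using assms hn s0 by simp
  have "t0^2+t1^2 = (f1*h3 + f3*h1)/s" by (simp add: t0s t1s add_divide_distrib)
  then have tt: "t0^2+t1^2 = 1" using s0 unfolding s_def by simp
  note m = mid_facts[OF assms tt]
  define G where "G = Gn/Gd"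
  define m11 where "m11 = G - p*cb^2*t0^2 - q*ca^2*t1^2"
  define m22 where "m22 = G - q*sa^2*t0^2 - p*sb^2*t1^2"
  define m12 where "m12 = -(t0*t1*(p*cb*sb+q*ca*sa))"
  have "f3*h1*t0^2 - f1*h3*t1^2 = 0" unfolding t0s t1s by (simp add: field_simps)
  then have "m11*m22 = m12^2" using m(3) unfolding m11_def m22_def m12_def G_def by (simp add: power_mult_distrib)
  then obtain r0 r1 where r: "r0^2+r1^2 = 1" "m11*r0^2 + 2*m12*r0*r1 + m22*r1^2 = 0"
    using eig by blast
  have "m11*r0^2 + 2*m12*r0*r1 + m22*r1^2 = G*(r0^2+r1^2) - ff r0 r1 t0 t1"
    unfolding m11_def m22_def m12_def ff_def using tt by (simp add: algebra_simps power2_eq_square)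
  then have "ff r0 r1 t0 t1 = Gn/Gd" using r unfolding G_def by simp
  then show ?thesis using r(1) tt by blast
qed

end



lemma sum2: "(\<Sum>i<(2::nat). f i) = f 0 + (f 1 :: 'a::comm_monoid_add)"
  by (simp add: numeral_2_eq_2 lessThan_Suc add.commute)

lemma (in hs) cx_bound:
  fixes a0 a1 b0 b1 :: complex
  shows "p * (cmod (of_real cb * a0 * b0 + of_real sb * a1 * b1))^2
       + q * (cmod (of_real ca * a0 * b1 + of_real sa * a1 * b0))^2
       \<le> ff (cmod a0) (cmod a1) (cmod b0) (cmod b1)"
proof -
  have "cmod (of_real cb * a0 * b0 + of_real sb * a1 * b1) \<le> cb * cmod a0 * cmod b0 + sb * cmod a1 * cmod b1"
    using norm_triangle_ineq[of "of_real cb * a0 * b0" "of_real sb * a1 * b1"] cb0 sb0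
    by (simp add: norm_mult)
  then have 1: "(cmod (of_real cb * a0 * b0 + of_real sb * a1 * b1))^2 \<le> (cb * cmod a0 * cmod b0 + sb * cmod a1 * cmod b1)^2"
    by (intro power_mono) auto
  have "cmod (of_real ca * a0 * b1 + of_real sa * a1 * b0) \<le> ca * cmod a0 * cmod b1 + sa * cmod a1 * cmod b0"
    using norm_triangle_ineq[of "of_real ca * a0 * b1" "of_real sa * a1 * b0"] ca0 sa0
    by (simp add: norm_mult)
  then have 2: "(cmod (of_real ca * a0 * b1 + of_real sa * a1 * b0))^2 \<le> (ca * cmod a0 * cmod b1 + sa * cmod a1 * cmod b0)^2"
    by (intro power_mono) auto
  show ?thesis unfolding ff_def using 1 2 p0 q0
    by (intro add_mono mult_left_mono) auto
qed

lemma gmax_char: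
  assumes trig: "cos g1 = ca*cb - sa*sb" "sin g1 = sa*cb + ca*sb" "cos g2 = ca*cb + sa*sb" "sin g2 = sa*cb - ca*sb"
    and H: "hs ca sa cb sb ((1+x)/2) ((1-x)/2)"
    and ub: "\<And>r0 r1 t0 t1. r0^2+r1^2 = 1 \<Longrightarrow> t0^2+t1^2=1 \<Longrightarrow> hs.ff ca sa cb sb ((1+x)/2) ((1-x)/2) r0 r1 t0 t1 \<le> V"
    and att: "\<exists>r0 r1 t0 t1. r0^2+r1^2 = 1 \<and> t0^2+t1^2=1 \<and> hs.ff ca sa cb sb ((1+x)/2) ((1-x)/2) r0 r1 t0 t1 = V"
  shows "gmax ((1/2 :: complex) \<cdot>\<^sub>m (Sigma0 g1 g2 + complex_of_real x \<cdot>\<^sub>m Sigma3 g1 g2)) = V"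
proof -
  interpret hs ca sa cb sb "(1+x)/2" "(1-x)/2" by (rule H)
  let ?\<rho> = "(1/2 :: complex) \<cdot>\<^sub>m (Sigma0 g1 g2 + complex_of_real x \<cdot>\<^sub>m Sigma3 g1 g2)"
  let ?S = "{Re (mtrace (?\<rho> * kron P Q)) | P Q. pure_qubit P \<and> pure_qubit Q}"
  have val: "Re (mtrace (?\<rho> * kron (mat 2 2 (\<lambda>(i,j). \<psi> $ i * cnj (\<psi> $ j))) (mat 2 2 (\<lambda>(i,j). \<phi> $ i * cnj (\<phi> $ j)))))
     = (1+x)/2 * (cmod (of_real cb * \<psi>$0 * \<phi>$0 + of_real sb * \<psi>$1 * \<phi>$1))^2
     + (1-x)/2 * (cmod (of_real ca * \<psi>$0 * \<phi>$1 + of_real sa * \<psi>$1 * \<phi>$0))^2"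
    if "\<psi> \<in> carrier_vec 2" "\<phi> \<in> carrier_vec 2" for \<psi> \<phi>
    by (rule trace_value[OF trig cs_a cs_b that])
  have le: "s \<le> V" if sS: "s \<in> ?S" for s
  proof -
    obtain P Q where s: "s = Re (mtrace (?\<rho> * kron P Q))" and "pure_qubit P" "pure_qubit Q" using sS by auto
    then obtain \<psi> \<phi> where ps: "\<psi> \<in> carrier_vec 2" "(\<Sum>i<2. (cmod (\<psi> $ i))\<^sup>2) = 1"
        "P = mat 2 2 (\<lambda>(i,j). \<psi> $ i * cnj (\<psi> $ j))"
      and ph: "\<phi> \<in> carrier_vec 2" "(\<Sum>i<2. (cmod (\<phi> $ i))\<^sup>2) = 1"
        "Q = mat 2 2 (\<lambda>(i,j). \<phi> $ i * cnj (\<phi> $ j))"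
      unfolding pure_qubit_def by blast
    have u1: "(cmod (\<psi>$0))^2 + (cmod (\<psi>$1))^2 = 1" using ps(2) by (simp add: sum2)
    have u2: "(cmod (\<phi>$0))^2 + (cmod (\<phi>$1))^2 = 1" using ph(2) by (simp add: sum2)
    have "s = (1+x)/2 * (cmod (of_real cb * \<psi>$0 * \<phi>$0 + of_real sb * \<psi>$1 * \<phi>$1))^2
     + (1-x)/2 * (cmod (of_real ca * \<psi>$0 * \<phi>$1 + of_real sa * \<psi>$1 * \<phi>$0))^2"
      using s ps(3) ph(3) val[OF ps(1) ph(1)] by simp
    also have "\<dots> \<le> ff (cmod (\<psi>$0)) (cmod (\<psi>$1)) (cmod (\<phi>$0)) (cmod (\<phi>$1))" by (rule cx_bound)
    also have "\<dots> \<le> V" by (rule ub[OF u1 u2])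
    finally show ?thesis .
  qed
  obtain r0 r1 t0 t1 where r: "r0^2+r1^2 = 1" "t0^2+t1^2=1" "ff r0 r1 t0 t1 = V" using att by blast
  define \<psi> where "\<psi> = vec 2 (\<lambda>i. if i = 0 then complex_of_real r0 else complex_of_real r1)"
  define \<phi> where "\<phi> = vec 2 (\<lambda>i. if i = 0 then complex_of_real t0 else complex_of_real t1)"
  have c: "\<psi> \<in> carrier_vec 2" "\<phi> \<in> carrier_vec 2" by (simp_all add: \<psi>_def \<phi>_def)
  have e: "\<psi>$0 = of_real r0" "\<psi>$1 = of_real r1" "\<phi>$0 = of_real t0" "\<phi>$1 = of_real t1"
    by (simp_all add: \<psi>_def \<phi>_def)
  have e': "\<psi>$Suc 0 = of_real r1" "\<phi>$Suc 0 = of_real t1" using e by simp_all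
  have pq1: "pure_qubit (mat 2 2 (\<lambda>(i,j). \<psi> $ i * cnj (\<psi> $ j)))"
    unfolding pure_qubit_def using c(1) r(1) by (intro bexI[of _ \<psi>]) (simp_all add: sum2 e e')
  have pq2: "pure_qubit (mat 2 2 (\<lambda>(i,j). \<phi> $ i * cnj (\<phi> $ j)))"
    unfolding pure_qubit_def using c(2) r(2) by (intro bexI[of _ \<phi>]) (simp_all add: sum2 e e')
  have "Re (mtrace (?\<rho> * kron (mat 2 2 (\<lambda>(i,j). \<psi> $ i * cnj (\<psi> $ j))) (mat 2 2 (\<lambda>(i,j). \<phi> $ i * cnj (\<phi> $ j))))) = ff r0 r1 t0 t1"
    unfolding val[OF c] e ff_def
    by (simp only: of_real_mult[symmetric] of_real_add[symmetric] norm_of_real power2_abs)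
  then have "V \<in> ?S" using pq1 pq2 r(3) unfolding mem_Collect_eq
    by (intro exI[of _ "mat 2 2 (\<lambda>(i,j). \<psi> $ i * cnj (\<psi> $ j))"] exI[of _ "mat 2 2 (\<lambda>(i,j). \<phi> $ i * cnj (\<phi> $ j))"]) simp
  then show ?thesis unfolding gmax_def by (rule cSup_eq_maximum) (rule le)
qed


theorem mainTheorem3:
  fixes g1 g2 x3 :: real
  assumes "0 \<le> g2" "g2 \<le> g1" "g1 \<le> pi/2" "g1 + g2 \<le> pi/2"
    and "-1 \<le> x3" "x3 \<le> 1"
  defines "\<rho> \<equiv> (1/2 :: complex) \<cdot>\<^sub>m (Sigma0 g1 g2 + complex_of_real x3 \<cdot>\<^sub>m Sigma3 g1 g2)"
    and "xa \<equiv> x3crit 1 g1 g2"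
    and "xb \<equiv> x3crit (-1) g1 g2"
  shows "-1 \<le> xa \<and> xa \<le> 0 \<and> 0 \<le> xb \<and> xb \<le> 1 \<and>
    gmax \<rho> =
      (if x3 \<le> xa then (1 - x3) * (1 + cos (g1 + g2)) / 4
       else if x3 < xb then
         ((1 - x3\<^sup>2) * sin g1 * cos g2 * (cos g2 * sin g1 - x3 * cos g1 * sin g2)) /
         (-2 * (x3\<^sup>2 - (cos g2 * sin g1 - x3 * cos g1 * sin g2)\<^sup>2))
       else (1 + x3) * (1 + cos (g1 - g2)) / 4)"
proof -
  define a where "a = (g1+g2)/2"
  define b where "b = (g1-g2)/2"
  define ca where "ca = cos a"
  define sa where "sa = sin a"
  define cb where "cb = cos b"
  define sb where "sb = sin b"
  define p where "p = (1+x3)/2"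
  define q where "q = (1-x3)/2"
  have ab: "0 \<le> b" "b \<le> a" "a \<le> pi/4" using assms(1-4) by (simp_all add: a_def b_def)
  have g: "g1 = a + b" "g2 = a - b" unfolding a_def b_def by (simp_all add: field_simps)
  have trig: "cos g1 = ca*cb - sa*sb" "sin g1 = sa*cb + ca*sb" "cos g2 = ca*cb + sa*sb" "sin g2 = sa*cb - ca*sb"
    by (simp_all add: g cos_add sin_add cos_diff sin_diff ca_def sa_def cb_def sb_def)
  have csa: "ca^2+sa^2=1" and csb: "cb^2+sb^2=1" by (simp_all add: ca_def sa_def cb_def sb_def)
  have ca0: "ca > 0" unfolding ca_def using ab pi_gt_zero by (intro cos_gt_zero_pi) linarith+
  have cb0: "cb > 0" unfolding cb_def using ab pi_gt_zero by (intro cos_gt_zero_pi) linarith+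
  have sa0: "sa \<ge> 0" unfolding sa_def using ab pi_gt_zero by (intro sin_ge_zero) linarith+
  have sb0: "sb \<ge> 0" unfolding sb_def using ab pi_gt_zero by (intro sin_ge_zero) linarith+
  have sbcb: "sb \<le> cb"
  proof -
    have "sin b \<le> sin (pi/2 - b)" using ab pi_gt_zero by (subst sin_mono_le_eq) linarith+
    then show ?thesis by (simp add: sb_def cb_def cos_sin_eq)
  qed
  have saca: "sa \<le> ca"
  proof -
    have "sin a \<le> sin (pi/2 - a)" using ab pi_gt_zero by (subst sin_mono_le_eq) linarith+
    then show ?thesis by (simp add: sa_def ca_def cos_sin_eq)
  qed
  have sbsa: "sb \<le> sa"
  proof -
    have "sin b \<le> sin a" using ab pi_gt_zero by (subst sin_mono_le_eq) linarith+
    then show ?thesis by (simp add: sa_def sb_def)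
  qed
  have H: "hs ca sa cb sb p q"
    by unfold_locales (use csa csb ca0 cb0 sa0 sb0 sbcb saca sbsa assms(5,6) in \<open>simp_all add: p_def q_def field_simps\<close>)
  interpret hs ca sa cb sb p q by (rule H)
  note c = cAcB
  define Na where "Na = ca*cA - ca - sa*sB"
  define Da where "Da = ca*cA + ca + sa*sB"
  define Nb where "Nb = cb + sb*sA - cb*cB"
  define Db where "Db = cb + sb*sA + cb*cB"
  have Da0: "Da > 0" unfolding Da_def using ca0 c sa0 by (smt (verit) mult_nonneg_nonneg)
  have Db0: "Db > 0" unfolding Db_def using cb0 c sb0 by (smt (verit) mult_nonneg_nonneg)
  have C2: "cos g2 > 0" unfolding trig using ca0 cb0 sa0 sb0 by (smt (verit) mult_nonneg_nonneg mult_pos_pos)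
  define E where "E = cos g2 + cos g1*(cos g2*cos g2 - sin g2*(cos g1*sin g2*cos g2 + (sin g1)^2*sin g2))"
  have E: "E = Da*Db/2" unfolding E_def trig Da_def Db_def cA_def sA_def cB_def sB_def
    using csa csb by Groebner_Basis.algebra
  have D0: "1 + cos g1 * (cos g2 - sin g2 * (cos g1 * sin g2 + (sin g1)\<^sup>2 * tan g2)) = E / cos g2"
    unfolding E_def tan_def using C2 by (simp add: field_simps)
  have N1: "(- sin g1 * (1 * sin g1 + (cos g1 * cos g2 + (sin g1)\<^sup>2) * sin g2)) * cos g2 = Na*Db/2"
    unfolding trig Na_def Db_def cA_def sA_def cB_def sB_def using csa csb by Groebner_Basis.algebra
  have N2: "(- sin g1 * ((-1) * sin g1 + (cos g1 * cos g2 + (sin g1)\<^sup>2) * sin g2)) * cos g2 = Nb*Da/2"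
    unfolding trig Nb_def Da_def cA_def sA_def cB_def sB_def using csa csb by Groebner_Basis.algebra
  have xa: "xa = Na/Da"
  proof -
    have "xa = (- sin g1 * (1 * sin g1 + (cos g1 * cos g2 + (sin g1)\<^sup>2) * sin g2)) / (E / cos g2)"
      unfolding xa_def x3crit_def D0 by simp
    also have "\<dots> = (Na*Db/2) / E" by (simp only: divide_divide_eq_right N1)
    also have "\<dots> = Na/Da" unfolding E using Db0 Da0 by (simp add: field_simps)
    finally show ?thesis .
  qed
  have xb: "xb = Nb/Db"
  proof -
    have "xb = (- sin g1 * ((-1) * sin g1 + (cos g1 * cos g2 + (sin g1)\<^sup>2) * sin g2)) / (E / cos g2)"
      unfolding xb_def x3crit_def D0 by simp
    also have "\<dots> = (Nb*Da/2) / E" by (simp only: divide_divide_eq_right N2)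
    also have "\<dots> = Nb/Db" unfolding E using Db0 Da0 by (simp add: field_simps)
    finally show ?thesis .
  qed
  have f1x: "2*f1 = x3*Da - Na" unfolding f1_def Da_def Na_def unfolding p_def q_def by Groebner_Basis.algebra
  have f3x: "2*f3 = Nb - x3*Db" unfolding f3_def Db_def Nb_def unfolding p_def q_def by Groebner_Basis.algebra
  have ca1: "ca^2 \<le> 1" using csa by (smt (verit) zero_le_power2)
  have cb1: "cb^2 \<le> 1" using csb by (smt (verit) zero_le_power2)
  have cA1: "cA \<le> 1" unfolding cA_def using ca1 by (smt (verit) zero_le_power2)
  have cB1: "cB \<le> 1" unfolding cB_def using cb1 by (smt (verit) zero_le_power2)
  have Na0: "Na \<le> 0" unfolding Na_def using ca0 cA1 sa0 c
    by (smt (verit) mult_nonneg_nonneg mult_left_le)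
  have "ca*cA \<ge> 0" using ca0 c(1) by simp
  then have NaDa: "-Da \<le> Na" unfolding Na_def Da_def by linarith
  have Nb0: "Nb \<ge> 0" unfolding Nb_def using cb0 cB1 sb0 c
    by (smt (verit) mult_nonneg_nonneg mult_left_le)
  have "cb*cB \<ge> 0" using cb0 c(2) by simp
  then have NbDb: "Nb \<le> Db" unfolding Nb_def Db_def by linarith
  have bounds: "-1 \<le> xa \<and> xa \<le> 0 \<and> 0 \<le> xb \<and> xb \<le> 1"
    unfolding xa xb using Da0 Db0 Na0 NaDa Nb0 NbDb
    by (simp add: divide_le_0_iff le_divide_eq divide_le_eq)
  have p1: "(1+x3)/2 = p" "(1-x3)/2 = q" by (simp_all add: p_def q_def)
  have val1: "(1 - x3) * (1 + cos (g1 + g2)) / 4 = q*ca^2"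
  proof -
    have ee: "g1+g2 = 2*a" using g by linarith
    have "cos (g1+g2) = cos (2*a)" by (simp only: ee)
    also have "\<dots> = ca^2 - sa^2" by (simp add: cos_double ca_def sa_def)
    finally have "cos (g1+g2) = ca^2 - sa^2" .
    then have h: "1 + cos (g1+g2) = 2*ca^2" using csa by linarith
    show ?thesis unfolding h q_def by (simp add: field_simps)
  qed
  have val3: "(1 + x3) * (1 + cos (g1 - g2)) / 4 = p*cb^2"
  proof -
    have ee: "g1-g2 = 2*b" using g by linarith
    have "cos (g1-g2) = cos (2*b)" by (simp only: ee)
    also have "\<dots> = cb^2 - sb^2" by (simp add: cos_double cb_def sb_def)
    finally have "cos (g1-g2) = cb^2 - sb^2" .
    then have h: "1 + cos (g1-g2) = 2*cb^2" using csb by linarith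
    show ?thesis unfolding h p_def by (simp add: field_simps)
  qed
  have gm: "gmax \<rho> = V" if ub: "\<And>r0 r1 t0 t1. r0^2+r1^2 = 1 \<Longrightarrow> t0^2+t1^2=1 \<Longrightarrow> ff r0 r1 t0 t1 \<le> V"
    and att: "\<exists>r0 r1 t0 t1. r0^2+r1^2 = 1 \<and> t0^2+t1^2=1 \<and> ff r0 r1 t0 t1 = V" for V
    unfolding \<rho>_def
    by (rule gmax_char[OF trig]) (use H ub att in \<open>simp_all add: p1\<close>)
  have main: "gmax \<rho> =
      (if x3 \<le> xa then (1 - x3) * (1 + cos (g1 + g2)) / 4
       else if x3 < xb then
         ((1 - x3\<^sup>2) * sin g1 * cos g2 * (cos g2 * sin g1 - x3 * cos g1 * sin g2)) /
         (-2 * (x3\<^sup>2 - (cos g2 * sin g1 - x3 * cos g1 * sin g2)\<^sup>2))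
       else (1 + x3) * (1 + cos (g1 - g2)) / 4)"
  proof (cases "x3 \<le> xa")
    case True
    then have "x3*Da \<le> Na" unfolding xa using Da0 by (simp add: le_divide_eq)
    then have f1n: "f1 \<le> 0" using f1x by simp
    have "gmax \<rho> = q*ca^2"
    proof (rule gm)
      show "ff r0 r1 t0 t1 \<le> q*ca^2" if "r0^2+r1^2 = 1" "t0^2+t1^2=1" for r0 r1 t0 t1
        by (rule reg1[OF f1n that])
      show "\<exists>r0 r1 t0 t1. r0^2+r1^2 = 1 \<and> t0^2+t1^2=1 \<and> ff r0 r1 t0 t1 = q*ca^2"
        by (intro exI[of _ 1] exI[of _ 0] exI[of _ 0] exI[of _ 1]) (simp add: ff_def)
    qed
    then show ?thesis using True val1 by simp
  next
    case False
    then have f1p: "f1 > 0" unfolding xa using Da0 f1x by (simp add: not_le divide_less_eq)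
    show ?thesis
    proof (cases "x3 < xb")
      case True
      then have f3p: "f3 > 0" unfolding xb using Db0 f3x by (simp add: less_divide_eq)
      have Gd0: "Gd > 0" using mid_pos[OF f1p f3p] by simp
      have TTe: "cos g2 * sin g1 - x3 * cos g1 * sin g2 = TT"
        unfolding trig TT_def sA_def sB_def unfolding p_def q_def using csa csb by Groebner_Basis.algebra
      have s1: "(1 - x3\<^sup>2) * sin g1 * cos g2 = 4*p*q*(sa*ca+sb*cb)"
        unfolding trig p_def q_def using csa csb by Groebner_Basis.algebra
      have num: "(1 - x3\<^sup>2) * sin g1 * cos g2 * TT = 2*Gn"
        unfolding s1 Gn_def sA_def sB_def by (simp add: algebra_simps)
      have pmq: "p - q = x3" by (simp add: p_def q_def field_simps)
      have den: "-2 * (x3\<^sup>2 - TT\<^sup>2) = 2*Gd"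
        unfolding Gd_def pmq by (simp add: algebra_simps)
      have "gmax \<rho> = Gn/Gd"
      proof (rule gm)
        show "ff r0 r1 t0 t1 \<le> Gn/Gd" if "r0^2+r1^2 = 1" "t0^2+t1^2=1" for r0 r1 t0 t1
          by (rule mid_bound[OF f1p f3p that])
        show "\<exists>r0 r1 t0 t1. r0^2+r1^2 = 1 \<and> t0^2+t1^2=1 \<and> ff r0 r1 t0 t1 = Gn/Gd"
          by (rule mid_attain[OF f1p f3p])
      qed
      moreover have "((1 - x3\<^sup>2) * sin g1 * cos g2 * (cos g2 * sin g1 - x3 * cos g1 * sin g2)) /
         (-2 * (x3\<^sup>2 - (cos g2 * sin g1 - x3 * cos g1 * sin g2)\<^sup>2)) = Gn/Gd"
        unfolding TTe num den using Gd0 by simp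
      ultimately show ?thesis using False True by simp
    next
      case False2: False
      then have "Nb \<le> x3*Db" unfolding xb using Db0 by (simp add: not_less divide_le_eq)
      then have f3n: "f3 \<le> 0" using f3x by simp
      have "gmax \<rho> = p*cb^2"
      proof (rule gm)
        show "ff r0 r1 t0 t1 \<le> p*cb^2" if "r0^2+r1^2 = 1" "t0^2+t1^2=1" for r0 r1 t0 t1
          by (rule reg3[OF f3n that])
        show "\<exists>r0 r1 t0 t1. r0^2+r1^2 = 1 \<and> t0^2+t1^2=1 \<and> ff r0 r1 t0 t1 = p*cb^2"
          by (intro exI[of _ 1] exI[of _ 0] exI[of _ 1] exI[of _ 0]) (simp add: ff_def)
      qed
      then show ?thesis using False False2 val3 by simp
    qed
  qed
  show ?thesis using bounds main by simp
qed

end
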